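(* With $G_d$ and $g_d$ as defined below, for all $(\mathbf{x},k)\in\mathbb{R}^d\times\mathbb{R}$, $$G_d(\mathbf{x},k)=\int_{\mathbb{R}^d}(|\mathbf{x}\cdot\mathbf{w}|-|k|)^+g_d(\mathbf{w})\,d\mathbf{w}.$$
   Context: $G_d(\mathbf{x},k)=\mathbf{1}_{\mathbf{x}\neq\mathbf 0}|\mathbf{x}|e^{-k^2/|\mathbf{x}|^2}$ for $(\mathbf{x},k)\in\mathbb{R}^d\times\mathbb{R}$, and $g_d(\mathbf{w})=-\frac{\sqrt\pi}{2}\mathcal{F}^{-1}_{\mathbf{x}}\big[|\mathbf{x}|^2e^{-|\mathbf{x}|^2/4}\big](\mathbf{w})$, where $\mathcal{F}^{-1}f(\mathbf{w})=(2\pi)^{-d}\int f(\mathbf{x})e^{i\mathbf{w}\cdot\mathbf{x}}d\mathbf{x}$. *)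

theory Defs
  imports "HOL-Analysis.Analysis"
begin

definition inv_fourier :: "('a::euclidean_space \<Rightarrow> complex) \<Rightarrow> 'a \<Rightarrow> complex" where
  "inv_fourier f w = complex_of_real ((2 * pi) powr (- real DIM('a))) *
     (LINT x|lborel. f x * exp (\<i> * complex_of_real (w \<bullet> x)))"

definition G_d :: "'a::euclidean_space \<Rightarrow> real \<Rightarrow> real" where
  "G_d x k = (if x \<noteq> 0 then norm x * exp (- (k^2) / (norm x)^2) else 0)"

definition g_d :: "'a::euclidean_space \<Rightarrow> complex" where
  "g_d w = - complex_of_real (sqrt pi / 2) *
     inv_fourier (\<lambda>y::'a. complex_of_real ((norm y) ^ 2 * exp (- ((norm y) ^ 2) / 4))) w"

end

theory Submission
  imports Defs "HOL-Probability.Probability" "HOL-Real_Asymp.Real_Asymp"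
begin
lemma gauss_normal:
  fixes a u :: real assumes a: "0 < a"
  shows "exp (- a * u\<^sup>2) = sqrt (pi / a) * normal_density 0 (1 / sqrt (2 * a)) u"
proof -
  have s: "(1 / sqrt (2 * a))\<^sup>2 = 1 / (2 * a)" using a by (simp add: power_divide)
  have "sqrt (pi / a) * (1 / sqrt (2 * pi * (1 / (2 * a)))) = 1"
    using a by (simp add: real_sqrt_divide field_simps)
  moreover have "- (u\<^sup>2) / (2 * (1 / (2 * a))) = - a * u\<^sup>2" using a by (simp add: field_simps)
  ultimately show ?thesis unfolding normal_density_def s using a by simp
qed

lemma integrable_gauss:
  fixes a :: real assumes a: "0 < a"
  shows "integrable lborel (\<lambda>u. exp (- a * u\<^sup>2) * u ^ k)"
proof -
  have "integrable lborel (\<lambda>u. sqrt (pi / a) * (normal_density 0 (1 / sqrt (2 * a)) u * (u - 0) ^ k))"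
    using integrable_normal_moment[where \<sigma>="1 / sqrt (2 * a)" and \<mu>=0 and k=k] a by simp
  then show ?thesis by (subst gauss_normal[OF a]) (simp add: mult_ac)
qed

lemma integrable_gauss_abs:
  fixes a :: real assumes a: "0 < a"
  shows "integrable lborel (\<lambda>u. exp (- a * u\<^sup>2) * \<bar>u\<bar> ^ k)"
proof -
  have "integrable lborel (\<lambda>u. sqrt (pi / a) * (normal_density 0 (1 / sqrt (2 * a)) u * \<bar>u - 0\<bar> ^ k))"
    using integrable_normal_moment_abs[where \<sigma>="1 / sqrt (2 * a)" and \<mu>=0 and k=k] a by simp
  then show ?thesis by (subst gauss_normal[OF a]) (simp add: mult_ac)
qed

lemma ftc_line_zero:
  fixes F f :: "real \<Rightarrow> complex"
  assumes F: "\<And>u. (F has_vector_derivative f u) (at u)"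
    and f: "\<And>u. isCont f u" and fi: "integrable lborel f"
    and top: "(F \<longlongrightarrow> 0) at_top" and bot: "(F \<longlongrightarrow> 0) at_bot"
  shows "integral\<^sup>L lborel f = 0"
proof -
  have "(LBINT u=-\<infinity>..\<infinity>. f u) = 0 - 0"
    by (rule interval_integral_FTC_integrable)
       (use F f fi top bot in \<open>auto simp: ereal_tendsto_simps1 set_integrable_def\<close>)
  then show ?thesis
    by (simp add: interval_lebesgue_integral_def set_lebesgue_integral_def)
qed

lemma char_sn: "(LINT x|lborel. std_normal_density x *\<^sub>R exp (\<i> * complex_of_real (t * x)))
   = complex_of_real (exp (- (t\<^sup>2) / 2))"
proof -
  have "char std_normal_distribution t = complex_of_real (exp (- (t\<^sup>2) / 2))"
    by (simp add: char_std_normal_distribution)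
  then show ?thesis unfolding char_def
    by (subst (asm) integral_density) auto
qed

lemma four0:
  fixes a t :: real assumes a: "0 < a"
  shows "(LINT u|lborel. complex_of_real (exp (- a * u\<^sup>2)) * exp (\<i> * complex_of_real (t * u)))
       = complex_of_real (sqrt (pi / a) * exp (- (t\<^sup>2) / (4 * a)))"
proof -
  define c where "c = 1 / sqrt (2 * a)"
  have c: "c > 0" "c\<^sup>2 = 1 / (2 * a)" using a by (auto simp: c_def power_divide)
  have eq: "complex_of_real (exp (- a * (0 + c * x)\<^sup>2)) * exp (\<i> * complex_of_real (t * (0 + c * x)))
      = complex_of_real (sqrt (2 * pi)) * (std_normal_density x *\<^sub>R exp (\<i> * complex_of_real ((t * c) * x)))" for x
  proof -
    have "- a * (0 + c * x)\<^sup>2 = - (x\<^sup>2) / 2" using c a by (simp add: power_mult_distrib field_simps)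
    then show ?thesis by (simp add: std_normal_density_def scaleR_conv_of_real mult_ac)
  qed
  have "(LINT u|lborel. complex_of_real (exp (- a * u\<^sup>2)) * exp (\<i> * complex_of_real (t * u)))
     = \<bar>c\<bar> *\<^sub>R (LINT x|lborel. complex_of_real (exp (- a * (0 + c * x)\<^sup>2)) * exp (\<i> * complex_of_real (t * (0 + c * x))))"
    by (rule lborel_integral_real_affine) (use c in auto)
  also have "\<dots> = c *\<^sub>R (complex_of_real (sqrt (2 * pi)) * (LINT x|lborel. std_normal_density x *\<^sub>R exp (\<i> * complex_of_real ((t * c) * x))))"
    unfolding eq integral_mult_right_zero using c by simp
  also have "\<dots> = c *\<^sub>R (complex_of_real (sqrt (2 * pi)) * complex_of_real (exp (- ((t * c)\<^sup>2) / 2)))"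
    by (simp only: char_sn)
  also have "\<dots> = complex_of_real (sqrt (pi / a) * exp (- (t\<^sup>2) / (4 * a)))"
  proof -
    have "c * sqrt (2 * pi) = sqrt (pi / a)" using a
      by (simp add: c_def real_sqrt_divide real_sqrt_mult field_simps)
    moreover have "(t * c)\<^sup>2 / 2 = t\<^sup>2 / (4 * a)" using c a by (simp add: power_mult_distrib field_simps)
    ultimately show ?thesis by (simp add: scaleR_conv_of_real mult_ac) (metis mult.commute of_real_mult)
  qed
  finally show ?thesis .
qed

lemma integrable_gauss_four:
  fixes a t :: real assumes a: "0 < a"
  shows "integrable lborel (\<lambda>u. complex_of_real (exp (- a * u\<^sup>2) * u ^ k) * exp (\<i> * complex_of_real (t * u)))"
  by (rule Bochner_Integration.integrable_bound[OF integrable_gauss[OF a, of k]]) (auto simp: norm_mult norm_power abs_mult power_abs)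

lemma d_iexp: "((\<lambda>u. exp (\<i> * complex_of_real (t * u))) has_vector_derivative
   (\<i> * complex_of_real t) * exp (\<i> * complex_of_real (t * u))) (at u)"
proof -
  have "((\<lambda>z. exp (\<i> * of_real t * z)) has_field_derivative (\<i> * of_real t) * exp (\<i> * of_real t * of_real u)) (at (of_real u))"
    by (auto intro!: derivative_eq_intros)
  then have "((\<lambda>x. exp (\<i> * of_real t * of_real x)) has_vector_derivative (\<i> * of_real t) * exp (\<i> * of_real t * of_real u)) (at u)"
    by (rule has_vector_derivative_real_field)
  then show ?thesis by (simp add: mult_ac)
qed

lemma four2_aux:
  fixes a t :: real assumes a: "0 < a"
  defines "P \<equiv> \<lambda>k u. complex_of_real (exp (- a * u\<^sup>2) * u ^ k) * exp (\<i> * complex_of_real (t * u))"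
  shows "integral\<^sup>L lborel (P 2) = integral\<^sup>L lborel (P 0) * complex_of_real (1 / (2 * a) - t\<^sup>2 / (4 * a\<^sup>2))"
proof -
  have int: "integrable lborel (P k)" for k unfolding P_def by (rule integrable_gauss_four[OF a])
  have cont: "isCont (P k) u" for k u unfolding P_def by (intro continuous_intros)
  have lim: "(P k \<longlongrightarrow> 0) at_top" "(P k \<longlongrightarrow> 0) at_bot" for k
  proof -
    have n: "norm (P k u) = exp (- a * u\<^sup>2) * \<bar>u\<bar> ^ k" for u
      unfolding P_def by (simp add: norm_mult norm_power)
    have "((\<lambda>u. exp (- a * u\<^sup>2) * \<bar>u\<bar> ^ k) \<longlongrightarrow> 0) at_top" using a by real_asymp
    then show "(P k \<longlongrightarrow> 0) at_top" by (subst tendsto_norm_zero_iff[symmetric]) (simp add: n)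
    have "((\<lambda>u. exp (- a * u\<^sup>2) * \<bar>u\<bar> ^ k) \<longlongrightarrow> 0) at_bot" using a by real_asymp
    then show "(P k \<longlongrightarrow> 0) at_bot" by (subst tendsto_norm_zero_iff[symmetric]) (simp add: n)
  qed
  have dexp: "((\<lambda>u. exp (- a * u\<^sup>2)) has_real_derivative exp (- a * u\<^sup>2) * (- 2 * a * u)) (at u)" for u
    by (auto intro!: derivative_eq_intros)
  have D0: "(P 0 has_vector_derivative (complex_of_real (- 2 * a) * P 1 u + (\<i> * complex_of_real t) * P 0 u)) (at u)" for u
  proof -
    have "((\<lambda>u. complex_of_real (exp (- a * u\<^sup>2)) * exp (\<i> * complex_of_real (t * u))) has_vector_derivative
       (complex_of_real (exp (- a * u\<^sup>2)) * ((\<i> * complex_of_real t) * exp (\<i> * complex_of_real (t * u)))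
        + complex_of_real (exp (- a * u\<^sup>2) * (- 2 * a * u)) * exp (\<i> * complex_of_real (t * u)))) (at u)"
      by (intro has_vector_derivative_mult has_vector_derivative_of_real dexp d_iexp)
    then show ?thesis unfolding P_def by (simp add: algebra_simps)
  qed
  have D1: "(P 1 has_vector_derivative (P 0 u + complex_of_real (- 2 * a) * P 2 u + (\<i> * complex_of_real t) * P 1 u)) (at u)" for u
  proof -
    have d: "((\<lambda>u. exp (- a * u\<^sup>2) * u) has_real_derivative exp (- a * u\<^sup>2) * (- 2 * a * u) * u + exp (- a * u\<^sup>2)) (at u)"
      by (auto intro!: derivative_eq_intros)
    have "((\<lambda>u. complex_of_real (exp (- a * u\<^sup>2) * u) * exp (\<i> * complex_of_real (t * u))) has_vector_derivative
       (complex_of_real (exp (- a * u\<^sup>2) * u) * ((\<i> * complex_of_real t) * exp (\<i> * complex_of_real (t * u)))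
        + complex_of_real (exp (- a * u\<^sup>2) * (- 2 * a * u) * u + exp (- a * u\<^sup>2)) * exp (\<i> * complex_of_real (t * u)))) (at u)"
      by (intro has_vector_derivative_mult has_vector_derivative_of_real d d_iexp)
    then show ?thesis unfolding P_def by (simp add: algebra_simps power2_eq_square)
  qed
  have E0: "integral\<^sup>L lborel (\<lambda>u. complex_of_real (- 2 * a) * P 1 u + (\<i> * complex_of_real t) * P 0 u) = 0"
    by (rule ftc_line_zero[OF D0]) (intro continuous_intros cont Bochner_Integration.integrable_add integrable_mult_right int lim)+
  have E1: "integral\<^sup>L lborel (\<lambda>u. P 0 u + complex_of_real (- 2 * a) * P 2 u + (\<i> * complex_of_real t) * P 1 u) = 0"
    by (rule ftc_line_zero[OF D1]) (intro continuous_intros cont Bochner_Integration.integrable_add integrable_mult_right int lim)+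
  define I where "I k = integral\<^sup>L lborel (P k)" for k
  have e0: "complex_of_real (- 2 * a) * I 1 + (\<i> * complex_of_real t) * I 0 = 0"
    using E0 unfolding I_def
    by (subst (asm) Bochner_Integration.integral_add) (auto intro!: int integrable_mult_right)
  have e1: "I 0 + complex_of_real (- 2 * a) * I 2 + (\<i> * complex_of_real t) * I 1 = 0"
  proof -
    have i1: "integrable lborel (\<lambda>u. P 0 u + complex_of_real (- 2 * a) * P 2 u)"
      by (intro Bochner_Integration.integrable_add integrable_mult_right int)
    have "integral\<^sup>L lborel (\<lambda>u. P 0 u + complex_of_real (- 2 * a) * P 2 u + (\<i> * complex_of_real t) * P 1 u)
       = integral\<^sup>L lborel (\<lambda>u. P 0 u + complex_of_real (- 2 * a) * P 2 u) + integral\<^sup>L lborel (\<lambda>u. (\<i> * complex_of_real t) * P 1 u)"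
      by (rule Bochner_Integration.integral_add[OF i1]) (intro integrable_mult_right int)
    also have "integral\<^sup>L lborel (\<lambda>u. P 0 u + complex_of_real (- 2 * a) * P 2 u)
       = I 0 + complex_of_real (- 2 * a) * I 2" unfolding I_def
      by (subst Bochner_Integration.integral_add) (auto intro!: integrable_mult_right int)
    finally show ?thesis using E1 unfolding I_def by simp
  qed
  have "I 2 = I 0 * complex_of_real (1 / (2 * a) - t\<^sup>2 / (4 * a\<^sup>2))"
  proof -
    have a0: "complex_of_real a \<noteq> 0" using a by simp
    from e0 have i1: "I 1 = (\<i> * complex_of_real t) * I 0 / (2 * complex_of_real a)" using a0
      by (simp add: field_simps)
    from e1 have "I 2 = (I 0 + (\<i> * complex_of_real t) * I 1) / (2 * complex_of_real a)" using a0
      by (simp add: field_simps)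
    also have "\<dots> = I 0 * complex_of_real (1 / (2 * a) - t\<^sup>2 / (4 * a\<^sup>2))" unfolding i1 using a0
      by (simp add: field_simps power2_eq_square)
    finally show ?thesis .
  qed
  then show ?thesis unfolding I_def .
qed

lemma four0': "0 < a \<Longrightarrow> (LINT u|lborel. complex_of_real (exp (- a * u\<^sup>2) * u ^ 0) * exp (\<i> * complex_of_real (t * u)))
       = complex_of_real (sqrt (pi / a) * exp (- (t\<^sup>2) / (4 * a)))"
  using four0 by simp

lemma four2:
  fixes a t :: real assumes a: "0 < a"
  shows "(LINT u|lborel. complex_of_real (exp (- a * u\<^sup>2) * u ^ 2) * exp (\<i> * complex_of_real (t * u)))
       = complex_of_real (sqrt (pi / a) * exp (- (t\<^sup>2) / (4 * a)) * (1 / (2 * a) - t\<^sup>2 / (4 * a\<^sup>2)))"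
  using four2_aux[OF a, of t] four0'[OF a, of t] by simp

lemma lborel_prod:
  fixes f :: "'a::euclidean_space \<Rightarrow> real \<Rightarrow> complex"
  assumes f: "\<And>b. b \<in> Basis \<Longrightarrow> integrable lborel (f b)"
  shows "integrable lborel (\<lambda>w::'a. \<Prod>b\<in>Basis. f b (w \<bullet> b))"
    and "(LINT w|lborel. (\<Prod>b\<in>Basis. f b (w \<bullet> b))) = (\<Prod>b\<in>Basis. LINT u|lborel. f b u)"
proof -
  interpret product_sigma_finite "\<lambda>_::'a. lborel :: real measure"
    by standard
  define T where "T = (\<lambda>\<phi>::'a \<Rightarrow> real. \<Sum>b\<in>Basis. \<phi> b *\<^sub>R b)"
  have T: "T \<in> measurable (\<Pi>\<^sub>M b\<in>Basis. lborel) borel" unfolding T_def by measurable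
  have Tb: "T \<phi> \<bullet> b = \<phi> b" if "b \<in> Basis" for \<phi> b
    using that unfolding T_def by (simp add: inner_sum_left inner_Basis if_distrib sum.delta cong: if_cong)
  have fm[measurable]: "f b \<in> borel_measurable borel" if "b \<in> Basis" for b
    using f[OF that] by (simp add: borel_measurable_integrable)
  have Fm: "(\<lambda>w::'a. \<Prod>b\<in>Basis. f b (w \<bullet> b)) \<in> borel_measurable borel"
  proof (intro borel_measurable_prod)
    fix b :: 'a assume b: "b \<in> Basis"
    have "(\<lambda>x::'a. x \<bullet> b) \<in> borel_measurable borel" by (intro borel_measurable_continuous_onI continuous_intros)
    then show "(\<lambda>x::'a. f b (x \<bullet> b)) \<in> borel_measurable borel" using measurable_compose fm[OF b] by blast
  qed
  have L: "lborel = distr (\<Pi>\<^sub>M b\<in>Basis. lborel) borel T" unfolding T_def by (rule lborel_eq)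
  have eq: "(\<lambda>\<phi>. \<Prod>b\<in>Basis. f b (T \<phi> \<bullet> b)) = (\<lambda>\<phi>. \<Prod>b\<in>Basis. f b (\<phi> b))"
    by (intro ext prod.cong refl) (simp add: Tb)
  show "integrable lborel (\<lambda>w::'a. \<Prod>b\<in>Basis. f b (w \<bullet> b))"
    by (subst L, subst integrable_distr_eq[OF T Fm]) (simp add: eq product_integrable_prod f)
  show "(LINT w|lborel. (\<Prod>b\<in>Basis. f b (w \<bullet> b))) = (\<Prod>b\<in>Basis. LINT u|lborel. f b u)"
    by (subst L, subst integral_distr[OF T Fm]) (simp add: eq product_integral_prod f)
qed

lemma norm_sq_basis: "norm (y::'a::euclidean_space) ^ 2 = (\<Sum>b\<in>Basis. (y \<bullet> b)^2)"
  unfolding power2_norm_eq_inner euclidean_inner[of y y] by (simp add: power2_eq_square)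

lemma prod_form:
  fixes y v :: "'a::euclidean_space" and k :: "'a \<Rightarrow> nat"
  shows "(\<Prod>b\<in>Basis. complex_of_real (exp (- a * (y \<bullet> b)\<^sup>2) * (y \<bullet> b) ^ k b) * exp (\<i> * complex_of_real ((v \<bullet> b) * (y \<bullet> b))))
    = complex_of_real (exp (- a * (norm y)\<^sup>2) * (\<Prod>b\<in>Basis. (y \<bullet> b) ^ k b)) * exp (\<i> * complex_of_real (v \<bullet> y))"
proof -
  have 1: "exp (- a * (norm y)\<^sup>2) = (\<Prod>b\<in>Basis. exp (- a * (y \<bullet> b)\<^sup>2))"
    by (simp add: norm_sq_basis sum_distrib_left exp_sum)
  have 2: "exp (\<i> * complex_of_real (v \<bullet> y)) = (\<Prod>b\<in>Basis. exp (\<i> * complex_of_real ((v \<bullet> b) * (y \<bullet> b))))"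
    by (simp add: euclidean_inner[of v y] sum_distrib_left exp_sum)
  show ?thesis unfolding 1 2 by (simp add: prod.distrib of_real_prod)
qed

lemma gauss_vec0:
  fixes v :: "'a::euclidean_space" assumes a: "0 < a"
  shows "integrable lborel (\<lambda>y::'a. complex_of_real (exp (- a * (norm y)\<^sup>2)) * exp (\<i> * complex_of_real (v \<bullet> y)))"
    and "(LINT y|lborel. complex_of_real (exp (- a * (norm y)\<^sup>2)) * exp (\<i> * complex_of_real (v \<bullet> y)))
        = complex_of_real (sqrt (pi / a) ^ DIM('a) * exp (- ((norm v)\<^sup>2) / (4 * a)))"
proof -
  define f where "f = (\<lambda>(b::'a) u. complex_of_real (exp (- a * u\<^sup>2) * u ^ 0) * exp (\<i> * complex_of_real ((v \<bullet> b) * u)))"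
  have fi: "integrable lborel (f b)" for b unfolding f_def by (rule integrable_gauss_four[OF a])
  have eq: "(\<lambda>y::'a. \<Prod>b\<in>Basis. f b (y \<bullet> b)) = (\<lambda>y. complex_of_real (exp (- a * (norm y)\<^sup>2)) * exp (\<i> * complex_of_real (v \<bullet> y)))"
    unfolding f_def using prod_form[of a _ "\<lambda>_. 0" v] by simp
  show "integrable lborel (\<lambda>y::'a. complex_of_real (exp (- a * (norm y)\<^sup>2)) * exp (\<i> * complex_of_real (v \<bullet> y)))"
    using lborel_prod(1)[of f, OF fi] unfolding eq .
  have "(LINT y|lborel. complex_of_real (exp (- a * (norm y)\<^sup>2)) * exp (\<i> * complex_of_real (v \<bullet> y)))
     = (\<Prod>b\<in>(Basis::'a set). complex_of_real (sqrt (pi / a) * exp (- ((v \<bullet> b)\<^sup>2) / (4 * a))))"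
  proof -
    have "integral\<^sup>L lborel (f b) = complex_of_real (sqrt (pi / a) * exp (- ((v \<bullet> b)\<^sup>2) / (4 * a)))" for b
      unfolding f_def by (rule four0'[OF a])
    then show ?thesis using lborel_prod(2)[of f, OF fi] unfolding eq by simp
  qed
  also have "\<dots> = complex_of_real (sqrt (pi / a) ^ DIM('a) * exp (- ((norm v)\<^sup>2) / (4 * a)))"
    by (simp add: of_real_prod[symmetric] prod.distrib exp_sum[symmetric] norm_sq_basis sum_divide_distrib sum_negf)
  finally show "(LINT y|lborel. complex_of_real (exp (- a * (norm y)\<^sup>2)) * exp (\<i> * complex_of_real (v \<bullet> y)))
        = complex_of_real (sqrt (pi / a) ^ DIM('a) * exp (- ((norm v)\<^sup>2) / (4 * a)))" .
qed

lemma gauss_vec2: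
  fixes v :: "'a::euclidean_space" assumes a: "0 < a"
  shows "integrable lborel (\<lambda>y::'a. complex_of_real ((norm y)\<^sup>2 * exp (- a * (norm y)\<^sup>2)) * exp (\<i> * complex_of_real (v \<bullet> y)))"
    and "(LINT y|lborel. complex_of_real ((norm y)\<^sup>2 * exp (- a * (norm y)\<^sup>2)) * exp (\<i> * complex_of_real (v \<bullet> y)))
        = complex_of_real (sqrt (pi / a) ^ DIM('a) * exp (- ((norm v)\<^sup>2) / (4 * a))
             * (DIM('a) / (2 * a) - (norm v)\<^sup>2 / (4 * a\<^sup>2)))"
proof -
  define f where "f = (\<lambda>(c::'a) (b::'a) u. complex_of_real (exp (- a * u\<^sup>2) * u ^ (if b = c then 2 else 0))
       * exp (\<i> * complex_of_real ((v \<bullet> b) * u)))"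
  define Q where "Q = (\<lambda>s::real. sqrt (pi / a) * exp (- (s\<^sup>2) / (4 * a)))"
  define r where "r = (\<lambda>s::real. 1 / (2 * a) - s\<^sup>2 / (4 * a\<^sup>2))"
  have fi: "integrable lborel (f c b)" for b c unfolding f_def by (rule integrable_gauss_four[OF a])
  have pc: "(\<Prod>b\<in>Basis. (y \<bullet> b) ^ (if b = c then 2 else 0)) = (y \<bullet> c)\<^sup>2" if "c \<in> Basis" for y c :: 'a
  proof -
    have "(\<Prod>b\<in>Basis. (y \<bullet> b) ^ (if b = c then 2 else 0)) = (\<Prod>b\<in>Basis. if b = c then (y \<bullet> b)\<^sup>2 else 1)"
      by (intro prod.cong) auto
    then show ?thesis using that by (simp add: prod.delta)
  qed
  have eq: "(\<lambda>y::'a. \<Sum>c\<in>Basis. \<Prod>b\<in>Basis. f c b (y \<bullet> b))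
      = (\<lambda>y. complex_of_real ((norm y)\<^sup>2 * exp (- a * (norm y)\<^sup>2)) * exp (\<i> * complex_of_real (v \<bullet> y)))"
  proof
    fix y :: 'a
    have "(\<Sum>c\<in>Basis. \<Prod>b\<in>Basis. f c b (y \<bullet> b))
       = (\<Sum>c\<in>Basis. complex_of_real (exp (- a * (norm y)\<^sup>2) * (y \<bullet> c)\<^sup>2) * exp (\<i> * complex_of_real (v \<bullet> y)))"
      unfolding f_def by (intro sum.cong refl) (simp only: prod_form pc)
    also have "\<dots> = complex_of_real (exp (- a * (norm y)\<^sup>2) * (\<Sum>c\<in>Basis. (y \<bullet> c)\<^sup>2)) * exp (\<i> * complex_of_real (v \<bullet> y))"
      by (simp add: sum_distrib_right sum_distrib_left)
    finally show "(\<Sum>c\<in>Basis. \<Prod>b\<in>Basis. f c b (y \<bullet> b))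
      = complex_of_real ((norm y)\<^sup>2 * exp (- a * (norm y)\<^sup>2)) * exp (\<i> * complex_of_real (v \<bullet> y))"
      by (simp add: norm_sq_basis mult_ac)
  qed
  have pi: "integrable lborel (\<lambda>y::'a. \<Prod>b\<in>Basis. f c b (y \<bullet> b))" for c
    by (rule lborel_prod(1)) (rule fi)
  show "integrable lborel (\<lambda>y::'a. complex_of_real ((norm y)\<^sup>2 * exp (- a * (norm y)\<^sup>2)) * exp (\<i> * complex_of_real (v \<bullet> y)))"
    unfolding eq[symmetric] by (intro Bochner_Integration.integrable_sum pi)
  have ic: "integral\<^sup>L lborel (f c b) = complex_of_real (Q (v \<bullet> b) * (if b = c then r (v \<bullet> b) else 1))" for b c
  proof (cases "b = c")
    case True then show ?thesis unfolding f_def Q_def r_def using four2[OF a, of "v \<bullet> b"] by simp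
  next
    case False then show ?thesis unfolding f_def Q_def r_def using four0'[OF a, of "v \<bullet> b"] by simp
  qed
  have "(LINT y|lborel. complex_of_real ((norm y)\<^sup>2 * exp (- a * (norm y)\<^sup>2)) * exp (\<i> * complex_of_real (v \<bullet> y)))
      = (\<Sum>c\<in>Basis. (LINT y|lborel. (\<Prod>b\<in>Basis. f c b (y \<bullet> b))))"
    unfolding eq[symmetric] by (intro Bochner_Integration.integral_sum pi)
  also have "\<dots> = (\<Sum>c\<in>(Basis::'a set). complex_of_real ((\<Prod>b\<in>Basis. Q (v \<bullet> b)) * r (v \<bullet> c)))"
  proof (intro sum.cong refl)
    fix c :: 'a assume c: "c \<in> Basis"
    have "(LINT y|lborel. (\<Prod>b\<in>Basis. f c b (y \<bullet> b))) = (\<Prod>b\<in>Basis. integral\<^sup>L lborel (f c b))"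
      by (rule lborel_prod(2)) (rule fi)
    also have "\<dots> = complex_of_real (\<Prod>b\<in>Basis. Q (v \<bullet> b) * (if b = c then r (v \<bullet> b) else 1))"
      by (simp add: ic of_real_prod)
    also have "\<dots> = complex_of_real ((\<Prod>b\<in>Basis. Q (v \<bullet> b)) * r (v \<bullet> c))"
      using c by (simp add: prod.distrib prod.delta)
    finally show "(LINT y|lborel. (\<Prod>b\<in>Basis. f c b (y \<bullet> b))) = complex_of_real ((\<Prod>b\<in>Basis. Q (v \<bullet> b)) * r (v \<bullet> c))" .
  qed
  also have "\<dots> = complex_of_real (sqrt (pi / a) ^ DIM('a) * exp (- ((norm v)\<^sup>2) / (4 * a))
             * (DIM('a) / (2 * a) - (norm v)\<^sup>2 / (4 * a\<^sup>2)))"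
  proof -
    have "(\<Prod>b\<in>(Basis::'a set). Q (v \<bullet> b)) = sqrt (pi / a) ^ DIM('a) * exp (- ((norm v)\<^sup>2) / (4 * a))"
      unfolding Q_def by (simp add: prod.distrib exp_sum[symmetric] norm_sq_basis sum_divide_distrib sum_negf)
    moreover have "(\<Sum>c\<in>(Basis::'a set). r (v \<bullet> c)) = DIM('a) / (2 * a) - (norm v)\<^sup>2 / (4 * a\<^sup>2)"
      unfolding r_def by (simp add: sum_subtractf norm_sq_basis sum_divide_distrib)
    ultimately show ?thesis
      by (simp add: of_real_sum[symmetric] sum_distrib_left[symmetric])
  qed
  finally show "(LINT y|lborel. complex_of_real ((norm y)\<^sup>2 * exp (- a * (norm y)\<^sup>2)) * exp (\<i> * complex_of_real (v \<bullet> y)))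
        = complex_of_real (sqrt (pi / a) ^ DIM('a) * exp (- ((norm v)\<^sup>2) / (4 * a))
             * (DIM('a) / (2 * a) - (norm v)\<^sup>2 / (4 * a\<^sup>2)))" .
qed

lemma push:
  fixes f :: "'a::euclidean_space \<Rightarrow> real" and \<rho> F :: "real \<Rightarrow> real" and x :: 'a
  assumes fm[measurable]: "f \<in> borel_measurable borel" and f0: "\<And>w. 0 \<le> f w" and fi: "integrable lborel f"
    and rm[measurable]: "\<rho> \<in> borel_measurable borel" and r0: "\<And>s. 0 \<le> \<rho> s" and ri: "integrable lborel \<rho>"
    and pos: "0 < integral\<^sup>L lborel \<rho>"
    and ch: "\<And>t. (LINT w|lborel. complex_of_real (f w) * exp (\<i> * complex_of_real (t * (x \<bullet> w))))
                = (LINT s|lborel. complex_of_real (\<rho> s) * exp (\<i> * complex_of_real (t * s)))"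
    and Fm[measurable]: "F \<in> borel_measurable borel"
    and Fi: "integrable lborel (\<lambda>s. \<rho> s * F s)"
  shows "integrable lborel (\<lambda>w. f w * F (x \<bullet> w))"
    and "(LINT w|lborel. f w * F (x \<bullet> w)) = (LINT s|lborel. \<rho> s * F s)"
proof -
  define c where "c = integral\<^sup>L lborel \<rho>"
  have c: "0 < c" using pos by (simp add: c_def)
  have fc: "integral\<^sup>L lborel f = c"
    using ch[of 0] by (simp add: c_def)
  have xm[measurable]: "(\<lambda>w::'a. x \<bullet> w) \<in> borel_measurable borel"
    by (intro borel_measurable_continuous_onI continuous_intros)
  define M1 where "M1 = distr (density lborel (\<lambda>w. ennreal (f w / c))) borel (\<lambda>w. x \<bullet> w)"
  define M2 where "M2 = density lborel (\<lambda>s. ennreal (\<rho> s / c))"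
  have ps1: "prob_space (density lborel (\<lambda>w. ennreal (f w / c)))"
  proof (rule prob_spaceI)
    have "emeasure (density lborel (\<lambda>w. ennreal (f w / c))) (space (density lborel (\<lambda>w. ennreal (f w / c))))
        = (\<integral>\<^sup>+ w. ennreal (f w / c) \<partial>lborel)"
      by (simp add: emeasure_density)
    also have "\<dots> = ennreal (integral\<^sup>L lborel (\<lambda>w. f w / c))"
      using c f0 fi by (intro nn_integral_eq_integral) auto
    also have "\<dots> = 1" using c fc by simp
    finally show "emeasure (density lborel (\<lambda>w. ennreal (f w / c))) (space (density lborel (\<lambda>w. ennreal (f w / c)))) = 1" .
  qed
  have rd1: "real_distribution M1"
    unfolding M1_def real_distribution_def real_distribution_axioms_def
    by (auto intro!: prob_space.prob_space_distr ps1)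
  have rd2: "real_distribution M2"
    unfolding M2_def real_distribution_def real_distribution_axioms_def
  proof (auto intro!: prob_spaceI)
    have "emeasure (density lborel (\<lambda>s. ennreal (\<rho> s / c))) UNIV = (\<integral>\<^sup>+ s. ennreal (\<rho> s / c) \<partial>lborel)"
      by (simp add: emeasure_density)
    also have "\<dots> = ennreal (integral\<^sup>L lborel (\<lambda>s. \<rho> s / c))"
      using c r0 ri by (intro nn_integral_eq_integral) auto
    also have "\<dots> = 1" using c by (simp add: c_def)
    finally show "emeasure (density lborel (\<lambda>s. ennreal (\<rho> s / c))) UNIV = 1" .
  qed
  have "char M1 = char M2"
  proof
    fix t
    have "char M1 t = (LINT w|lborel. (f w / c) *\<^sub>R exp (\<i> * complex_of_real (t * (x \<bullet> w))))"
      unfolding char_def M1_def using c f0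
      by (subst integral_distr) (auto simp: integral_density)
    also have "\<dots> = (LINT w|lborel. complex_of_real (f w) * exp (\<i> * complex_of_real (t * (x \<bullet> w)))) / c"
      by (simp add: scaleR_conv_of_real mult_ac)
    also have "\<dots> = (LINT s|lborel. complex_of_real (\<rho> s) * exp (\<i> * complex_of_real (t * s))) / c"
      by (simp only: ch)
    also have "\<dots> = (LINT s|lborel. (\<rho> s / c) *\<^sub>R exp (\<i> * complex_of_real (t * s)))"
      by (simp add: scaleR_conv_of_real mult_ac)
    also have "\<dots> = char M2 t"
      unfolding char_def M2_def using c r0 by (subst integral_density) auto
    finally show "char M1 t = char M2 t" .
  qed
  then have M: "M1 = M2" by (intro Levy_uniqueness rd1 rd2)
  have i2: "integrable M2 F"
    unfolding M2_def using c r0 Fi by (subst integrable_density) (auto intro!: integrable_divide simp: mult_ac)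
  then have "integrable M1 F" using M by simp
  then have "integrable lborel (\<lambda>w. (f w / c) * F (x \<bullet> w))"
    unfolding M1_def using c f0 by (subst (asm) integrable_distr_eq) (auto simp: integrable_density)
  then have "integrable lborel (\<lambda>w. c * ((f w / c) * F (x \<bullet> w)))" by (intro integrable_mult_right)
  then show "integrable lborel (\<lambda>w. f w * F (x \<bullet> w))" using c by simp
  have "integral\<^sup>L M1 F = integral\<^sup>L M2 F" using M by simp
  then have "(LINT w|lborel. (f w / c) * F (x \<bullet> w)) = (LINT s|lborel. (\<rho> s / c) * F s)"
    unfolding M1_def M2_def using c f0 r0 by (subst (asm) integral_distr) (auto simp: integral_density)
  then have "(LINT w|lborel. f w * F (x \<bullet> w) / c) = (LINT s|lborel. \<rho> s * F s / c)"
    by (simp only: times_divide_eq_left)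
  then show "(LINT w|lborel. f w * F (x \<bullet> w)) = (LINT s|lborel. \<rho> s * F s)"
    using c by (simp only: integral_divide_zero) simp
qed

lemma integrable_poly3_gauss:
  fixes \<sigma> :: real assumes s: "0 < \<sigma>"
  shows "integrable lborel (\<lambda>u. exp (- (u\<^sup>2) / \<sigma>\<^sup>2) * (c3 * u ^ 3 + c2 * u\<^sup>2 + c1 * u + c0))"
proof -
  have a: "0 < 1 / \<sigma>\<^sup>2" using s by simp
  have e: "exp (- (u\<^sup>2) / \<sigma>\<^sup>2) = exp (- (1 / \<sigma>\<^sup>2) * u\<^sup>2)" for u by simp
  have "integrable lborel (\<lambda>u. c3 * (exp (- (1 / \<sigma>\<^sup>2) * u\<^sup>2) * u ^ 3) + c2 * (exp (- (1 / \<sigma>\<^sup>2) * u\<^sup>2) * u ^ 2)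
      + c1 * (exp (- (1 / \<sigma>\<^sup>2) * u\<^sup>2) * u ^ 1) + c0 * (exp (- (1 / \<sigma>\<^sup>2) * u\<^sup>2) * u ^ 0))"
    by (intro Bochner_Integration.integrable_add integrable_mult_right integrable_gauss[OF a])
  then show ?thesis unfolding e by (simp add: algebra_simps)
qed

lemma final1d:
  fixes \<sigma> k :: real assumes s: "0 < \<sigma>"
  shows "integrable lborel (\<lambda>u. max 0 (\<bar>u\<bar> - \<bar>k\<bar>) * ((4 * u\<^sup>2 / \<sigma>\<^sup>2 - 2) * exp (- (u\<^sup>2) / \<sigma>\<^sup>2)))"
    and "(LINT u|lborel. max 0 (\<bar>u\<bar> - \<bar>k\<bar>) * ((4 * u\<^sup>2 / \<sigma>\<^sup>2 - 2) * exp (- (u\<^sup>2) / \<sigma>\<^sup>2)))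
       = 2 * \<sigma>\<^sup>2 * exp (- (k\<^sup>2) / \<sigma>\<^sup>2)"
proof -
  have sne: "\<sigma> \<noteq> 0" using s by simp
  define K where "K = \<bar>k\<bar>"
  have K: "0 \<le> K" "K\<^sup>2 = k\<^sup>2" by (auto simp: K_def)
  define h1 where "h1 u = (u - K) * ((4 * u\<^sup>2 / \<sigma>\<^sup>2 - 2) * exp (- (u\<^sup>2) / \<sigma>\<^sup>2))" for u
  define h2 where "h2 u = (- u - K) * ((4 * u\<^sup>2 / \<sigma>\<^sup>2 - 2) * exp (- (u\<^sup>2) / \<sigma>\<^sup>2))" for u
  define H1 where "H1 u = - (2 * u * (u - K) + \<sigma>\<^sup>2) * exp (- (u\<^sup>2) / \<sigma>\<^sup>2)" for u
  define H2 where "H2 u = (2 * u * (u + K) + \<sigma>\<^sup>2) * exp (- (u\<^sup>2) / \<sigma>\<^sup>2)" for u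
  have i1: "integrable lborel h1"
  proof -
    have "integrable lborel (\<lambda>u. exp (- (u\<^sup>2) / \<sigma>\<^sup>2) * ((4 / \<sigma>\<^sup>2) * u ^ 3 + (- 4 * K / \<sigma>\<^sup>2) * u\<^sup>2 + (-2) * u + 2 * K))"
      by (rule integrable_poly3_gauss[OF s])
    then show ?thesis unfolding h1_def by (rule Bochner_Integration.integrable_cong[THEN iffD1, rotated 2])
       (use s in \<open>auto simp: field_simps power2_eq_square power3_eq_cube\<close>)
  qed
  have i2: "integrable lborel h2"
  proof -
    have "integrable lborel (\<lambda>u. exp (- (u\<^sup>2) / \<sigma>\<^sup>2) * ((- 4 / \<sigma>\<^sup>2) * u ^ 3 + (- 4 * K / \<sigma>\<^sup>2) * u\<^sup>2 + 2 * u + 2 * K))"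
      by (rule integrable_poly3_gauss[OF s])
    then show ?thesis unfolding h2_def by (rule Bochner_Integration.integrable_cong[THEN iffD1, rotated 2])
       (use s in \<open>auto simp: field_simps power2_eq_square power3_eq_cube\<close>)
  qed
  have dH1: "(H1 has_real_derivative h1 u) (at u)" for u
    unfolding H1_def h1_def
    apply (rule DERIV_cong, (auto intro!: derivative_eq_intros)[1]) using sne by (simp_all add: field_simps power2_eq_square)
  have dH2: "(H2 has_real_derivative h2 u) (at u)" for u
    unfolding H2_def h2_def
    apply (rule DERIV_cong, (auto intro!: derivative_eq_intros)[1]) using sne by (simp_all add: field_simps power2_eq_square)
  have cH1: "isCont H1 u" "isCont H2 u" "isCont h1 u" "isCont h2 u" for u
    unfolding H1_def H2_def h1_def h2_def using sne by (auto intro!: continuous_intros)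
  have "(LBINT u=ereal K..\<infinity>. h1 u) = 0 - H1 K"
  proof (rule interval_integral_FTC_integrable)
    show "set_integrable lborel (einterval (ereal K) \<infinity>) h1"
      unfolding set_integrable_def using integrable_mult_indicator[OF _ i1, of "{K<..}"] by simp
    show "((H1 \<circ> real_of_ereal) \<longlongrightarrow> H1 K) (at_right (ereal K))"
      unfolding ereal_tendsto_simps1 using cH1(1)[of K]
      by (simp add: isCont_def filterlim_at_split)
    have "((\<lambda>u. - (2 * u * (u - K) + \<sigma>\<^sup>2) * exp (- (u\<^sup>2) / \<sigma>\<^sup>2)) \<longlongrightarrow> 0) at_top" using s by real_asymp
    then show "((H1 \<circ> real_of_ereal) \<longlongrightarrow> 0) (at_left \<infinity>)"
      unfolding ereal_tendsto_simps1 H1_def .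
  qed (use dH1 cH1 in \<open>auto simp: has_real_derivative_iff_has_vector_derivative\<close>)
  then have I1: "(LINT u|lborel. indicator {K<..} u * h1 u) = \<sigma>\<^sup>2 * exp (- (k\<^sup>2) / \<sigma>\<^sup>2)"
    by (simp add: interval_lebesgue_integral_def set_lebesgue_integral_def H1_def K)
  have "(LBINT u=-\<infinity>..ereal (-K). h2 u) = H2 (-K) - 0"
  proof (rule interval_integral_FTC_integrable)
    show "set_integrable lborel (einterval (-\<infinity>) (ereal (-K))) h2"
      unfolding set_integrable_def using integrable_mult_indicator[OF _ i2, of "{..<-K}"] by simp
    show "((H2 \<circ> real_of_ereal) \<longlongrightarrow> H2 (-K)) (at_left (ereal (-K)))"
      unfolding ereal_tendsto_simps1 using cH1(2)[of "-K"]
      by (simp add: isCont_def filterlim_at_split)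
    have "((\<lambda>u. (2 * u * (u + K) + \<sigma>\<^sup>2) * exp (- (u\<^sup>2) / \<sigma>\<^sup>2)) \<longlongrightarrow> 0) at_bot" using s by real_asymp
    then show "((H2 \<circ> real_of_ereal) \<longlongrightarrow> 0) (at_right (-\<infinity>))"
      unfolding ereal_tendsto_simps1 H2_def .
  qed (use dH2 cH1 in \<open>auto simp: has_real_derivative_iff_has_vector_derivative\<close>)
  then have I2: "(LINT u|lborel. indicator {..<-K} u * h2 u) = \<sigma>\<^sup>2 * exp (- (k\<^sup>2) / \<sigma>\<^sup>2)"
    by (simp add: interval_lebesgue_integral_def set_lebesgue_integral_def H2_def K)
  have eq: "(\<lambda>u. max 0 (\<bar>u\<bar> - \<bar>k\<bar>) * ((4 * u\<^sup>2 / \<sigma>\<^sup>2 - 2) * exp (- (u\<^sup>2) / \<sigma>\<^sup>2)))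
      = (\<lambda>u. indicator {K<..} u * h1 u + indicator {..<-K} u * h2 u)"
    by (auto simp: fun_eq_iff h1_def h2_def K_def indicator_def max_def)
  have j1: "integrable lborel (\<lambda>u. indicator {K<..} u * h1 u)" using integrable_mult_indicator[OF _ i1, of "{K<..}"] by simp
  have j2: "integrable lborel (\<lambda>u. indicator {..<-K} u * h2 u)" using integrable_mult_indicator[OF _ i2, of "{..<-K}"] by simp
  show "integrable lborel (\<lambda>u. max 0 (\<bar>u\<bar> - \<bar>k\<bar>) * ((4 * u\<^sup>2 / \<sigma>\<^sup>2 - 2) * exp (- (u\<^sup>2) / \<sigma>\<^sup>2)))"
    unfolding eq by (intro Bochner_Integration.integrable_add j1 j2)
  show "(LINT u|lborel. max 0 (\<bar>u\<bar> - \<bar>k\<bar>) * ((4 * u\<^sup>2 / \<sigma>\<^sup>2 - 2) * exp (- (u\<^sup>2) / \<sigma>\<^sup>2)))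
       = 2 * \<sigma>\<^sup>2 * exp (- (k\<^sup>2) / \<sigma>\<^sup>2)"
    unfolding eq by (simp add: Bochner_Integration.integral_add[OF j1 j2] I1 I2)
qed

lemma alg_helper:
  fixes c P0 B Q e d n :: real assumes "P0 * B = Q"
  shows "- c * (P0 * (B * e * (2 * d - 4 * n))) = c * Q * ((4 * n - 2 * d) * e)"
proof -
  have "- c * (P0 * (B * e * (2 * d - 4 * n))) = c * (P0 * B) * ((4 * n - 2 * d) * e)"
    by (simp add: algebra_simps)
  then show ?thesis using assms by simp
qed

lemma pi_const: "(2 * pi) powr (- real d) * (2 * sqrt pi) ^ d = (1 / sqrt pi) ^ d"
proof -
  have e0: "(2 * pi) powr (- real d) = inverse ((2 * pi) ^ d)" by (simp add: powr_minus powr_realpow)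
  have e1: "inverse ((2 * pi) ^ d) * (2 * sqrt pi) ^ d = ((2 * sqrt pi) / (2 * pi)) ^ (d::nat)"
    by (simp only: divide_inverse power_mult_distrib power_inverse mult.commute)
  have e2a: "(2 * sqrt pi) / (2 * pi) = sqrt pi / pi" by (rule mult_divide_mult_cancel_left) simp
  have e2b: "sqrt pi / pi = 1 / sqrt pi"
  proof -
    have a: "sqrt pi * sqrt pi = pi" by simp
    have b: "sqrt pi \<noteq> 0" by simp
    show ?thesis using nonzero_divide_mult_cancel_left[OF b, of "sqrt pi"] unfolding a .
  qed
  show ?thesis unfolding e0 e1 e2a e2b ..
qed

lemma g_formula:
  fixes w :: "'a::euclidean_space"
  shows "g_d w = complex_of_real (sqrt pi / 2 * (1 / sqrt pi) ^ DIM('a)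
                   * ((4 * (norm w)\<^sup>2 - 2 * real DIM('a)) * exp (- ((norm w)\<^sup>2))))"
proof -
  have a: "(0::real) < 1 / 4" by simp
  have eqf: "(\<lambda>y::'a. complex_of_real ((norm y) ^ 2 * exp (- ((norm y) ^ 2) / 4)) * exp (\<i> * complex_of_real (w \<bullet> y)))
     = (\<lambda>y. complex_of_real ((norm y)\<^sup>2 * exp (- (1/4) * (norm y)\<^sup>2)) * exp (\<i> * complex_of_real (w \<bullet> y)))"
    by simp
  have I: "(LINT y|lborel. complex_of_real ((norm y) ^ 2 * exp (- ((norm y) ^ 2) / 4)) * exp (\<i> * complex_of_real (w \<bullet> y)))
     = complex_of_real ((2 * sqrt pi) ^ DIM('a) * exp (- ((norm w)\<^sup>2)) * (2 * real DIM('a) - 4 * (norm w)\<^sup>2))"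
  proof -
    have s4: "sqrt (pi / (1/4)) = 2 * sqrt pi" by (simp add: real_sqrt_mult)
    have q: "(4::real) * (1/4)\<^sup>2 = 1/4" by (simp add: power2_eq_square)
    have q2: "(4::real) * (1/4) = 1" "(2::real) * (1/4) = 1/2" by simp_all
    have q3: "x / (1/4) = 4 * (x::real)" "x / (1/2) = 2 * (x::real)" "x / 1 = x" for x by simp_all
    have "sqrt (pi / (1/4)) ^ DIM('a) * exp (- ((norm w)\<^sup>2) / (4 * (1/4))) * (real DIM('a) / (2 * (1/4)) - (norm w)\<^sup>2 / (4 * (1/4)\<^sup>2))
       = (2 * sqrt pi) ^ DIM('a) * exp (- ((norm w)\<^sup>2)) * (2 * real DIM('a) - 4 * (norm w)\<^sup>2)"
      unfolding s4 unfolding q q2 q3 ..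
    then show ?thesis unfolding eqf gauss_vec2(2)[OF a] by (rule arg_cong[where f=complex_of_real])
  qed
  have "g_d w = - complex_of_real (sqrt pi / 2) * (complex_of_real ((2 * pi) powr (- real DIM('a))) *
     complex_of_real ((2 * sqrt pi) ^ DIM('a) * exp (- ((norm w)\<^sup>2)) * (2 * real DIM('a) - 4 * (norm w)\<^sup>2)))"
    unfolding g_d_def inv_fourier_def I ..
  also have "\<dots> = complex_of_real (- (sqrt pi / 2) * ((2 * pi) powr (- real DIM('a)) *
     ((2 * sqrt pi) ^ DIM('a) * exp (- ((norm w)\<^sup>2)) * (2 * real DIM('a) - 4 * (norm w)\<^sup>2))))"
    by (simp only: of_real_mult of_real_minus)
  also have "\<dots> = complex_of_real (sqrt pi / 2 * (1 / sqrt pi) ^ DIM('a)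
                   * ((4 * (norm w)\<^sup>2 - 2 * real DIM('a)) * exp (- ((norm w)\<^sup>2))))"
    by (rule arg_cong[where f=complex_of_real], rule alg_helper[OF pi_const])
  finally show ?thesis .
qed

lemma rho_char:
  fixes \<sigma> t :: real assumes s: "0 < \<sigma>"
  shows "(LINT u|lborel. complex_of_real (exp (- (u\<^sup>2) / \<sigma>\<^sup>2)) * exp (\<i> * complex_of_real (t * u)))
      = complex_of_real (sqrt pi * \<sigma> * exp (- (t\<^sup>2 * \<sigma>\<^sup>2) / 4))"
    and "(LINT u|lborel. complex_of_real (u\<^sup>2 * exp (- (u\<^sup>2) / \<sigma>\<^sup>2)) * exp (\<i> * complex_of_real (t * u)))
      = complex_of_real (sqrt pi * \<sigma> * exp (- (t\<^sup>2 * \<sigma>\<^sup>2) / 4) * (\<sigma>\<^sup>2 / 2 - t\<^sup>2 * \<sigma>\<^sup>2 * \<sigma>\<^sup>2 / 4))"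
proof -
  have a: "0 < 1 / \<sigma>\<^sup>2" using s by simp
  have r1: "sqrt (pi / (1 / \<sigma>\<^sup>2)) = sqrt pi * \<sigma>" using s by (simp add: real_sqrt_mult)
  have r2: "- (t\<^sup>2) / (4 * (1 / \<sigma>\<^sup>2)) = - (t\<^sup>2 * \<sigma>\<^sup>2) / 4" using s by (simp add: field_simps)
  have r3: "1 / (2 * (1 / \<sigma>\<^sup>2)) - t\<^sup>2 / (4 * (1 / \<sigma>\<^sup>2)\<^sup>2) = \<sigma>\<^sup>2 / 2 - t\<^sup>2 * \<sigma>\<^sup>2 * \<sigma>\<^sup>2 / 4"
    using s by (simp add: field_simps power2_eq_square)
  have e0: "(\<lambda>u. complex_of_real (exp (- (u\<^sup>2) / \<sigma>\<^sup>2)) * exp (\<i> * complex_of_real (t * u)))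
      = (\<lambda>u. complex_of_real (exp (- (1 / \<sigma>\<^sup>2) * u\<^sup>2) * u ^ 0) * exp (\<i> * complex_of_real (t * u)))"
    by simp
  show "(LINT u|lborel. complex_of_real (exp (- (u\<^sup>2) / \<sigma>\<^sup>2)) * exp (\<i> * complex_of_real (t * u)))
      = complex_of_real (sqrt pi * \<sigma> * exp (- (t\<^sup>2 * \<sigma>\<^sup>2) / 4))"
    unfolding e0 four0'[OF a] r1 r2 ..
  have e2: "(\<lambda>u. complex_of_real (u\<^sup>2 * exp (- (u\<^sup>2) / \<sigma>\<^sup>2)) * exp (\<i> * complex_of_real (t * u)))
      = (\<lambda>u. complex_of_real (exp (- (1 / \<sigma>\<^sup>2) * u\<^sup>2) * u ^ 2) * exp (\<i> * complex_of_real (t * u)))"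
    by (simp add: mult.commute)
  show "(LINT u|lborel. complex_of_real (u\<^sup>2 * exp (- (u\<^sup>2) / \<sigma>\<^sup>2)) * exp (\<i> * complex_of_real (t * u)))
      = complex_of_real (sqrt pi * \<sigma> * exp (- (t\<^sup>2 * \<sigma>\<^sup>2) / 4) * (\<sigma>\<^sup>2 / 2 - t\<^sup>2 * \<sigma>\<^sup>2 * \<sigma>\<^sup>2 / 4))"
    unfolding e2 four2[OF a] r1 r2 r3 ..
qed

lemma vec_char:
  fixes x :: "'a::euclidean_space" and t :: real
  shows "(LINT w|lborel. complex_of_real (exp (- ((norm w)\<^sup>2))) * exp (\<i> * complex_of_real (t * (x \<bullet> w))))
      = complex_of_real (sqrt pi ^ DIM('a) * exp (- (t\<^sup>2 * (norm x)\<^sup>2) / 4))"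
    and "(LINT w|lborel. complex_of_real ((norm w)\<^sup>2 * exp (- ((norm w)\<^sup>2))) * exp (\<i> * complex_of_real (t * (x \<bullet> w))))
      = complex_of_real (sqrt pi ^ DIM('a) * exp (- (t\<^sup>2 * (norm x)\<^sup>2) / 4) * (real DIM('a) / 2 - t\<^sup>2 * (norm x)\<^sup>2 / 4))"
proof -
  have a: "(0::real) < 1" by simp
  have n: "(norm (t *\<^sub>R x))\<^sup>2 = t\<^sup>2 * (norm x)\<^sup>2" by (simp add: power_mult_distrib)
  have e0: "(\<lambda>w::'a. complex_of_real (exp (- ((norm w)\<^sup>2))) * exp (\<i> * complex_of_real (t * (x \<bullet> w))))
     = (\<lambda>w. complex_of_real (exp (- 1 * (norm w)\<^sup>2)) * exp (\<i> * complex_of_real ((t *\<^sub>R x) \<bullet> w)))"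
    by simp
  have q: "sqrt (pi / 1) = sqrt pi" "(4::real) * 1 = 4" "(2::real) * 1 = 2" "(4::real) * 1\<^sup>2 = 4" by simp_all
  show "(LINT w|lborel. complex_of_real (exp (- ((norm w)\<^sup>2))) * exp (\<i> * complex_of_real (t * (x \<bullet> w))))
      = complex_of_real (sqrt pi ^ DIM('a) * exp (- (t\<^sup>2 * (norm x)\<^sup>2) / 4))"
    unfolding e0 gauss_vec0(2)[OF a] n q ..
  have e2: "(\<lambda>w::'a. complex_of_real ((norm w)\<^sup>2 * exp (- ((norm w)\<^sup>2))) * exp (\<i> * complex_of_real (t * (x \<bullet> w))))
     = (\<lambda>w. complex_of_real ((norm w)\<^sup>2 * exp (- 1 * (norm w)\<^sup>2)) * exp (\<i> * complex_of_real ((t *\<^sub>R x) \<bullet> w)))"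
    by simp
  show "(LINT w|lborel. complex_of_real ((norm w)\<^sup>2 * exp (- ((norm w)\<^sup>2))) * exp (\<i> * complex_of_real (t * (x \<bullet> w))))
      = complex_of_real (sqrt pi ^ DIM('a) * exp (- (t\<^sup>2 * (norm x)\<^sup>2) / 4) * (real DIM('a) / 2 - t\<^sup>2 * (norm x)\<^sup>2 / 4))"
    unfolding e2 gauss_vec2(2)[OF a] n q ..
qed

lemma integrable_poly4_gauss:
  fixes \<sigma> :: real assumes s: "0 < \<sigma>"
  shows "integrable lborel (\<lambda>u. exp (- (u\<^sup>2) / \<sigma>\<^sup>2) * (c4 * u ^ 4 + c2 * u\<^sup>2 + c0))"
proof -
  have a: "0 < 1 / \<sigma>\<^sup>2" using s by simp
  have e: "exp (- (u\<^sup>2) / \<sigma>\<^sup>2) = exp (- (1 / \<sigma>\<^sup>2) * u\<^sup>2)" for u by simp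
  have "integrable lborel (\<lambda>u. c4 * (exp (- (1 / \<sigma>\<^sup>2) * u\<^sup>2) * u ^ 4) + c2 * (exp (- (1 / \<sigma>\<^sup>2) * u\<^sup>2) * u ^ 2)
      + c0 * (exp (- (1 / \<sigma>\<^sup>2) * u\<^sup>2) * u ^ 0))"
    by (intro Bochner_Integration.integrable_add integrable_mult_right integrable_gauss[OF a])
  then show ?thesis unfolding e by (simp add: algebra_simps)
qed

lemma phi_bound: "max 0 (\<bar>s\<bar> - \<bar>k\<bar>) \<le> 1 + s\<^sup>2" for s k :: real
proof -
  have h: "0 \<le> (\<bar>s\<bar> - 1)\<^sup>2" by simp
  have "(\<bar>s\<bar> - 1)\<^sup>2 = s\<^sup>2 - 2 * \<bar>s\<bar> + 1" by (simp add: power2_eq_square algebra_simps)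
  with h have "\<bar>s\<bar> \<le> 1 + s\<^sup>2" by (smt (verit) zero_le_power2)
  then show ?thesis by simp
qed

lemma alg2:
  fixes K P E s t c d Kp :: real
  assumes "Kp = K * P" "s \<noteq> 0" "c = (d - 1) / 2"
  shows "K / s\<^sup>2 * (P * E * (s\<^sup>2 / 2 - t\<^sup>2 * s\<^sup>2 * s\<^sup>2 / 4)) + K * c * (P * E) = Kp * E * (d / 2 - t\<^sup>2 * s\<^sup>2 / 4)"
  unfolding assms(1) assms(3) using assms(2) by (simp add: field_simps power2_eq_square)

lemma main_nonzero:
  fixes x :: "'a::euclidean_space" and k :: real
  assumes x: "x \<noteq> 0"
  shows "(LINT w|lborel. complex_of_real (max 0 (\<bar>x \<bullet> w\<bar> - \<bar>k\<bar>)) * g_d w)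
       = complex_of_real (norm x * exp (- (k\<^sup>2) / (norm x)\<^sup>2))"
proof -
  define \<sigma> where "\<sigma> = norm x"
  have s: "0 < \<sigma>" using x by (simp add: \<sigma>_def)
  define d where "d = DIM('a)"
  have d1: "1 \<le> real d" using DIM_positive[where 'a='a] by (simp add: d_def)
  define sp where "sp = sqrt pi"
  have sp: "0 < sp" by (simp add: sp_def)
  define K where "K = sp ^ d / (sp * \<sigma>)"
  have K0: "0 < K" using s sp by (simp add: K_def)
  have Kp: "K * (sp * \<sigma>) = sp ^ d" using s sp by (simp add: K_def)
  define c where "c = (real d - 1) / 2"
  have c0: "0 \<le> c" using d1 by (simp add: c_def)
  define \<phi> where "\<phi> s = max 0 (\<bar>s\<bar> - \<bar>k\<bar>)" for s :: real
  define e where "e s = exp (- (s\<^sup>2) / \<sigma>\<^sup>2)" for s :: real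
  define f0 where "f0 w = exp (- ((norm w)\<^sup>2))" for w :: 'a
  define f1 where "f1 w = (norm w)\<^sup>2 * exp (- ((norm w)\<^sup>2))" for w :: 'a
  define \<rho>0 where "\<rho>0 s = K * e s" for s
  define \<rho>1 where "\<rho>1 s = K * ((s\<^sup>2 / \<sigma>\<^sup>2 + c) * e s)" for s
  have X0: "(\<lambda>u. complex_of_real (exp (- (u\<^sup>2) / \<sigma>\<^sup>2)) * exp (\<i> * complex_of_real (t * u)))
      = (\<lambda>u. complex_of_real (exp (- (1 / \<sigma>\<^sup>2) * u\<^sup>2) * u ^ 0) * exp (\<i> * complex_of_real (t * u)))" for t
    by simp
  have X2: "(\<lambda>u. complex_of_real (u\<^sup>2 * exp (- (u\<^sup>2) / \<sigma>\<^sup>2)) * exp (\<i> * complex_of_real (t * u)))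
      = (\<lambda>u. complex_of_real (exp (- (1 / \<sigma>\<^sup>2) * u\<^sup>2) * u ^ 2) * exp (\<i> * complex_of_real (t * u)))" for t
    by (simp add: mult.commute)
  have a\<sigma>: "0 < 1 / \<sigma>\<^sup>2" using s by simp
  have I0: "integrable lborel (\<lambda>u. complex_of_real (exp (- (u\<^sup>2) / \<sigma>\<^sup>2)) * exp (\<i> * complex_of_real (t * u)))" for t
    unfolding X0 by (rule integrable_gauss_four[OF a\<sigma>])
  have I2: "integrable lborel (\<lambda>u. complex_of_real (u\<^sup>2 * exp (- (u\<^sup>2) / \<sigma>\<^sup>2)) * exp (\<i> * complex_of_real (t * u)))" for t
    unfolding X2 by (rule integrable_gauss_four[OF a\<sigma>])
  have R0: "(LINT u|lborel. complex_of_real (\<rho>0 u) * exp (\<i> * complex_of_real (t * u)))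
      = complex_of_real (sp ^ d * exp (- (t\<^sup>2 * \<sigma>\<^sup>2) / 4))" for t
  proof -
    have eqI: "(\<lambda>u. complex_of_real (\<rho>0 u) * exp (\<i> * complex_of_real (t * u)))
      = (\<lambda>u. complex_of_real K * (complex_of_real (exp (- (u\<^sup>2) / \<sigma>\<^sup>2)) * exp (\<i> * complex_of_real (t * u))))"
      by (simp add: \<rho>0_def e_def fun_eq_iff)
    have "(LINT u|lborel. complex_of_real (\<rho>0 u) * exp (\<i> * complex_of_real (t * u)))
       = complex_of_real K * complex_of_real (sp * \<sigma> * exp (- (t\<^sup>2 * \<sigma>\<^sup>2) / 4))"
      unfolding eqI integral_mult_right_zero rho_char(1)[OF s] sp_def by simp
    also have "\<dots> = complex_of_real (K * (sp * \<sigma>) * exp (- (t\<^sup>2 * \<sigma>\<^sup>2) / 4))"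
      by (simp only: of_real_mult mult.assoc)
    finally show ?thesis unfolding Kp .
  qed
  have R1: "(LINT u|lborel. complex_of_real (\<rho>1 u) * exp (\<i> * complex_of_real (t * u)))
      = complex_of_real (sp ^ d * exp (- (t\<^sup>2 * \<sigma>\<^sup>2) / 4) * (real d / 2 - t\<^sup>2 * \<sigma>\<^sup>2 / 4))" for t
  proof -
    have eqI: "(\<lambda>u. complex_of_real (\<rho>1 u) * exp (\<i> * complex_of_real (t * u)))
      = (\<lambda>u. complex_of_real (K / \<sigma>\<^sup>2) * (complex_of_real (u\<^sup>2 * exp (- (u\<^sup>2) / \<sigma>\<^sup>2)) * exp (\<i> * complex_of_real (t * u)))
          + complex_of_real (K * c) * (complex_of_real (exp (- (u\<^sup>2) / \<sigma>\<^sup>2)) * exp (\<i> * complex_of_real (t * u))))"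
      by (simp add: \<rho>1_def e_def fun_eq_iff algebra_simps)
    have "(LINT u|lborel. complex_of_real (\<rho>1 u) * exp (\<i> * complex_of_real (t * u)))
       = complex_of_real (K / \<sigma>\<^sup>2) * complex_of_real (sp * \<sigma> * exp (- (t\<^sup>2 * \<sigma>\<^sup>2) / 4) * (\<sigma>\<^sup>2 / 2 - t\<^sup>2 * \<sigma>\<^sup>2 * \<sigma>\<^sup>2 / 4))
         + complex_of_real (K * c) * complex_of_real (sp * \<sigma> * exp (- (t\<^sup>2 * \<sigma>\<^sup>2) / 4))"
      unfolding eqI by (simp only: Bochner_Integration.integral_add[OF integrable_mult_right[OF I2] integrable_mult_right[OF I0]]
            integral_mult_right_zero rho_char[OF s] sp_def)
    also have "\<dots> = complex_of_real (K / \<sigma>\<^sup>2 * (sp * \<sigma> * exp (- (t\<^sup>2 * \<sigma>\<^sup>2) / 4) * (\<sigma>\<^sup>2 / 2 - t\<^sup>2 * \<sigma>\<^sup>2 * \<sigma>\<^sup>2 / 4))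
         + K * c * (sp * \<sigma> * exp (- (t\<^sup>2 * \<sigma>\<^sup>2) / 4)))"
      by (simp only: of_real_mult of_real_add)
    also have "\<dots> = complex_of_real (sp ^ d * exp (- (t\<^sup>2 * \<sigma>\<^sup>2) / 4) * (real d / 2 - t\<^sup>2 * \<sigma>\<^sup>2 / 4))"
      by (rule arg_cong[where f=complex_of_real], rule alg2) (use Kp s in \<open>auto simp: c_def\<close>)
    finally show ?thesis .
  qed
  have V0: "(LINT w|lborel. complex_of_real (f0 w) * exp (\<i> * complex_of_real (t * (x \<bullet> w))))
      = complex_of_real (sp ^ d * exp (- (t\<^sup>2 * \<sigma>\<^sup>2) / 4))" for t
    unfolding f0_def vec_char(1) sp_def \<sigma>_def d_def ..
  have V1: "(LINT w|lborel. complex_of_real (f1 w) * exp (\<i> * complex_of_real (t * (x \<bullet> w))))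
      = complex_of_real (sp ^ d * exp (- (t\<^sup>2 * \<sigma>\<^sup>2) / 4) * (real d / 2 - t\<^sup>2 * \<sigma>\<^sup>2 / 4))" for t
    unfolding f1_def vec_char(2) sp_def \<sigma>_def d_def ..
  have ch0: "(LINT w|lborel. complex_of_real (f0 w) * exp (\<i> * complex_of_real (t * (x \<bullet> w))))
      = (LINT u|lborel. complex_of_real (\<rho>0 u) * exp (\<i> * complex_of_real (t * u)))" for t
    unfolding V0 R0 ..
  have ch1: "(LINT w|lborel. complex_of_real (f1 w) * exp (\<i> * complex_of_real (t * (x \<bullet> w))))
      = (LINT u|lborel. complex_of_real (\<rho>1 u) * exp (\<i> * complex_of_real (t * u)))" for t
    unfolding V1 R1 ..
  have f0m: "f0 \<in> borel_measurable borel" unfolding f0_def by (intro borel_measurable_continuous_onI continuous_intros)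
  have f1m: "f1 \<in> borel_measurable borel" unfolding f1_def by (intro borel_measurable_continuous_onI continuous_intros)
  have f0n: "0 \<le> f0 w" for w by (simp add: f0_def)
  have f1n: "0 \<le> f1 w" for w by (simp add: f1_def)
  have f0i: "integrable lborel f0"
    using gauss_vec0(1)[of 1 "0::'a"] unfolding f0_def by (simp add: complex_of_real_integrable_eq)
  have f1i: "integrable lborel f1"
    using gauss_vec2(1)[of 1 "0::'a"] unfolding f1_def by (simp add: complex_of_real_integrable_eq del: of_real_mult of_real_power)
  have em: "e \<in> borel_measurable borel" unfolding e_def using s by (intro borel_measurable_continuous_onI) (auto intro!: continuous_intros)
  have r0m: "\<rho>0 \<in> borel_measurable borel" unfolding \<rho>0_def using em by measurable
  have r1m: "\<rho>1 \<in> borel_measurable borel" unfolding \<rho>1_def using em by measurable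
  have e0: "0 < e u" for u by (simp add: e_def)
  have r0n: "0 \<le> \<rho>0 u" for u using K0 e0[of u] by (simp add: \<rho>0_def)
  have r1n: "0 \<le> \<rho>1 u" for u using K0 e0[of u] c0 by (simp add: \<rho>1_def)
  have r0i: "integrable lborel \<rho>0"
  proof -
    have "\<rho>0 = (\<lambda>u. exp (- (u\<^sup>2) / \<sigma>\<^sup>2) * (0 * u ^ 4 + 0 * u\<^sup>2 + K))"
      by (simp add: fun_eq_iff \<rho>0_def e_def mult.commute)
    then show ?thesis using integrable_poly4_gauss[OF s, of 0 0 K] by simp
  qed
  have r1i: "integrable lborel \<rho>1"
  proof -
    have "\<rho>1 = (\<lambda>u. exp (- (u\<^sup>2) / \<sigma>\<^sup>2) * (0 * u ^ 4 + K / \<sigma>\<^sup>2 * u\<^sup>2 + K * c))"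
      by (simp add: fun_eq_iff \<rho>1_def e_def algebra_simps)
    then show ?thesis using integrable_poly4_gauss[OF s, of 0 "K / \<sigma>\<^sup>2" "K * c"] by simp
  qed
  have pos0: "0 < integral\<^sup>L lborel \<rho>0"
  proof -
    have "integral\<^sup>L lborel \<rho>0 = sp ^ d" using R0[of 0] by (simp del: of_real_mult of_real_power)
    then show ?thesis using sp by simp
  qed
  have pos1: "0 < integral\<^sup>L lborel \<rho>1"
  proof -
    have "integral\<^sup>L lborel \<rho>1 = sp ^ d * (real d / 2)" using R1[of 0] by (simp del: of_real_mult of_real_power of_real_divide of_real_diff)
    moreover have "0 < sp ^ d * (real d / 2)" using sp d1 by simp
    ultimately show ?thesis by simp
  qed
  have \<phi>m: "\<phi> \<in> borel_measurable borel" unfolding \<phi>_def by (intro borel_measurable_continuous_onI continuous_intros)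
  have \<phi>n: "0 \<le> \<phi> u" for u by (simp add: \<phi>_def)
  have \<phi>b: "\<phi> u \<le> 1 + u\<^sup>2" for u unfolding \<phi>_def by (rule phi_bound)
  have Fi0: "integrable lborel (\<lambda>u. \<rho>0 u * \<phi> u)"
  proof (rule Bochner_Integration.integrable_bound[OF integrable_poly4_gauss[OF s, of 0 K K]])
    show "(\<lambda>u. \<rho>0 u * \<phi> u) \<in> borel_measurable lborel" using r0m \<phi>m by measurable
    show "AE u in lborel. norm (\<rho>0 u * \<phi> u) \<le> norm (exp (- (u\<^sup>2) / \<sigma>\<^sup>2) * (0 * u ^ 4 + K * u\<^sup>2 + K))"
    proof (rule AE_I2)
      fix u
      have "\<rho>0 u * \<phi> u \<le> \<rho>0 u * (1 + u\<^sup>2)" by (rule mult_left_mono[OF \<phi>b r0n])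
      also have "\<dots> = exp (- (u\<^sup>2) / \<sigma>\<^sup>2) * (0 * u ^ 4 + K * u\<^sup>2 + K)" by (simp add: \<rho>0_def e_def algebra_simps)
      finally show "norm (\<rho>0 u * \<phi> u) \<le> norm (exp (- (u\<^sup>2) / \<sigma>\<^sup>2) * (0 * u ^ 4 + K * u\<^sup>2 + K))"
        using r0n[of u] \<phi>n[of u] by simp
    qed
  qed
  have Fi1: "integrable lborel (\<lambda>u. \<rho>1 u * \<phi> u)"
  proof (rule Bochner_Integration.integrable_bound[OF integrable_poly4_gauss[OF s, of "K / \<sigma>\<^sup>2" "K / \<sigma>\<^sup>2 + K * c" "K * c"]])
    show "(\<lambda>u. \<rho>1 u * \<phi> u) \<in> borel_measurable lborel" using r1m \<phi>m by measurable
    show "AE u in lborel. norm (\<rho>1 u * \<phi> u) \<le> norm (exp (- (u\<^sup>2) / \<sigma>\<^sup>2) * (K / \<sigma>\<^sup>2 * u ^ 4 + (K / \<sigma>\<^sup>2 + K * c) * u\<^sup>2 + K * c))"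
    proof (rule AE_I2)
      fix u
      have "\<rho>1 u * \<phi> u \<le> \<rho>1 u * (1 + u\<^sup>2)" by (rule mult_left_mono[OF \<phi>b r1n])
      also have "\<dots> = exp (- (u\<^sup>2) / \<sigma>\<^sup>2) * (K / \<sigma>\<^sup>2 * u ^ 4 + (K / \<sigma>\<^sup>2 + K * c) * u\<^sup>2 + K * c)"
        by (simp add: \<rho>1_def e_def algebra_simps power2_eq_square power4_eq_xxxx add_divide_distrib)
      finally show "norm (\<rho>1 u * \<phi> u) \<le> norm (exp (- (u\<^sup>2) / \<sigma>\<^sup>2) * (K / \<sigma>\<^sup>2 * u ^ 4 + (K / \<sigma>\<^sup>2 + K * c) * u\<^sup>2 + K * c))"
        using r1n[of u] \<phi>n[of u] by simp
    qed
  qed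
  note P0 = push[of f0 \<rho>0 x \<phi>, OF f0m f0n f0i r0m r0n r0i pos0 ch0 \<phi>m Fi0]
  note P1 = push[of f1 \<rho>1 x \<phi>, OF f1m f1n f1i r1m r1n r1i pos1 ch1 \<phi>m Fi1]
  define C0 where "C0 = sp / 2 * (1 / sp) ^ d"
  have CK: "C0 * K = 1 / (2 * \<sigma>)"
  proof -
    have p1: "(1 / sp) ^ d * sp ^ d = 1"
    proof -
      have "(1 / sp) ^ d * sp ^ d = (1 / sp * sp) ^ d" by (rule power_mult_distrib[symmetric])
      also have "1 / sp * sp = 1" using sp by simp
      finally show ?thesis by simp
    qed
    have "C0 * K = sp / 2 * ((1 / sp) ^ d * sp ^ d) / (sp * \<sigma>)" unfolding C0_def K_def by simp
    also have "\<dots> = 1 / (2 * \<sigma>)" unfolding p1 using sp s by (simp add: field_simps)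
    finally show ?thesis .
  qed
  have A: "complex_of_real (max 0 (\<bar>x \<bullet> w\<bar> - \<bar>k\<bar>)) * g_d w
      = complex_of_real (C0 * 4 * (f1 w * \<phi> (x \<bullet> w)) - C0 * (2 * real d) * (f0 w * \<phi> (x \<bullet> w)))" for w
  proof -
    have "complex_of_real (max 0 (\<bar>x \<bullet> w\<bar> - \<bar>k\<bar>)) * g_d w
       = complex_of_real (\<phi> (x \<bullet> w)) * complex_of_real (C0 * ((4 * (norm w)\<^sup>2 - 2 * real d) * exp (- ((norm w)\<^sup>2))))"
      unfolding g_formula \<phi>_def C0_def sp_def d_def ..
    also have "\<dots> = complex_of_real (\<phi> (x \<bullet> w) * (C0 * ((4 * (norm w)\<^sup>2 - 2 * real d) * exp (- ((norm w)\<^sup>2)))))"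
      by (simp only: of_real_mult)
    also have "\<dots> = complex_of_real (C0 * 4 * (f1 w * \<phi> (x \<bullet> w)) - C0 * (2 * real d) * (f0 w * \<phi> (x \<bullet> w)))"
      by (rule arg_cong[where f=complex_of_real]) (simp add: f0_def f1_def algebra_simps)
    finally show ?thesis .
  qed
  have "(LINT w|lborel. complex_of_real (max 0 (\<bar>x \<bullet> w\<bar> - \<bar>k\<bar>)) * g_d w)
      = complex_of_real (LINT w|lborel. C0 * 4 * (f1 w * \<phi> (x \<bullet> w)) - C0 * (2 * real d) * (f0 w * \<phi> (x \<bullet> w)))"
    unfolding A by (rule integral_complex_of_real)
  also have "(LINT w|lborel. C0 * 4 * (f1 w * \<phi> (x \<bullet> w)) - C0 * (2 * real d) * (f0 w * \<phi> (x \<bullet> w)))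
      = C0 * 4 * (LINT s|lborel. \<rho>1 s * \<phi> s) - C0 * (2 * real d) * (LINT s|lborel. \<rho>0 s * \<phi> s)"
    by (simp add: Bochner_Integration.integral_diff[OF integrable_mult_right[OF P1(1)] integrable_mult_right[OF P0(1)]] P0(2) P1(2))
  also have "\<dots> = (LINT s|lborel. C0 * 4 * (\<rho>1 s * \<phi> s) - C0 * (2 * real d) * (\<rho>0 s * \<phi> s))"
    by (simp add: Bochner_Integration.integral_diff[OF integrable_mult_right[OF Fi1] integrable_mult_right[OF Fi0]])
  also have "\<dots> = (LINT s|lborel. (C0 * K) * (max 0 (\<bar>s\<bar> - \<bar>k\<bar>) * ((4 * s\<^sup>2 / \<sigma>\<^sup>2 - 2) * exp (- (s\<^sup>2) / \<sigma>\<^sup>2))))"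
  proof (rule Bochner_Integration.integral_cong[OF refl])
    fix s :: real
    have "C0 * 4 * (\<rho>1 s * \<phi> s) - C0 * (2 * real d) * (\<rho>0 s * \<phi> s)
       = (C0 * K) * (\<phi> s * e s) * (4 * (s\<^sup>2 / \<sigma>\<^sup>2 + c) - 2 * real d)"
      by (simp add: \<rho>0_def \<rho>1_def algebra_simps)
    also have "4 * (s\<^sup>2 / \<sigma>\<^sup>2 + c) - 2 * real d = 4 * s\<^sup>2 / \<sigma>\<^sup>2 - 2"
      by (simp add: c_def field_simps)
    finally show "C0 * 4 * (\<rho>1 s * \<phi> s) - C0 * (2 * real d) * (\<rho>0 s * \<phi> s)
       = (C0 * K) * (max 0 (\<bar>s\<bar> - \<bar>k\<bar>) * ((4 * s\<^sup>2 / \<sigma>\<^sup>2 - 2) * exp (- (s\<^sup>2) / \<sigma>\<^sup>2)))"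
      by (simp add: \<phi>_def e_def mult_ac)
  qed
  also have "\<dots> = (C0 * K) * (2 * \<sigma>\<^sup>2 * exp (- (k\<^sup>2) / \<sigma>\<^sup>2))"
    by (simp only: integral_mult_right_zero final1d(2)[OF s])
  also have "\<dots> = norm x * exp (- (k\<^sup>2) / (norm x)\<^sup>2)"
    unfolding CK \<sigma>_def[symmetric] using s by (simp add: power2_eq_square)
  finally show ?thesis .
qed

theorem mainTheorem10:
  fixes x :: "'a::euclidean_space" and k :: real
  shows "complex_of_real (G_d x k) =
    (LINT w|lborel. complex_of_real (max 0 (\<bar>x \<bullet> w\<bar> - \<bar>k\<bar>)) * g_d w)"
proof (cases "x = 0")
  case True
  then show ?thesis by (simp add: G_d_def)
next
  case False
  then show ?thesis using main_nonzero[OF False, of k] by (simp add: G_d_def)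
qed

end
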